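(* Suppose that $\gamma_*>0$ and $P[\mu_1,\mu_2]$ is a nonsingular matrix. Then the two $n\times 2$ matrices $U(\gamma_* )=[u_1(\gamma_* )\ u_2(\gamma_* )]$ and $V(\gamma_* )=[v_1(\gamma_* )\ v_2(\gamma_* )]$ are full rank.
   Context: Let $P(\lambda)=\sum_{j=0}^m A_j\lambda^j$ be an $n\times n$ matrix polynomial with $\det A_m\neq0$, let $\mu_1\neq\mu_2$ be complex numbers, $P[\mu_1,\mu_2]=\frac{P(\mu_1)-P(\mu_2)}{\mu_1-\mu_2}$, and $F[P(\mu_1,\mu_2);\gamma]=\begin{bmatrix} P(\mu_1) & 0\\ \gamma P[\mu_1,\mu_2] & P(\mu_2)\end{bmatrix}$. Let $\gamma_*$ be a point where $s_{2n-1}(F[P(\mu_1,\mu_2);\gamma])$ attains its maximum $s_*>0$ over $\gamma\ge0$. Let $\begin{bmatrix} u_1(\gamma_* )\\ u_2(\gamma_* )\end{bmatrix},\begin{bmatrix} v_1(\gamma_* )\\ v_2(\gamma_* )\end{bmatrix}$ ($u_k,v_k\in\mathbb{C}^n$) be a pair of left and right singular vectors of $s_*$ chosen such that $u_2(\gamma_* )^*P[\mu_1,\mu_2]v_1(\gamma_* )=0$, $u_2(\gamma_* )^*u_1(\gamma_* )=v_2(\gamma_* )^*v_1(\gamma_* )$, and $U(\gamma_* )^*U(\gamma_* )=V(\gamma_* )^*V(\gamma_* )$ (such a pair exists). *)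

theory Defs
  imports "Jordan_Normal_Form.Jordan_Normal_Form" "Jordan_Normal_Form.DL_Rank" "Jordan_Normal_Form.Schur_Decomposition"
    "HOL-Computational_Algebra.Polynomial" "HOL-Library.Multiset"
begin

definition mpoly_eval :: "nat \<Rightarrow> nat \<Rightarrow> (nat \<Rightarrow> complex mat) \<Rightarrow> complex \<Rightarrow> complex mat" where
  "mpoly_eval n m A z = mat n n (\<lambda>(i,k). \<Sum>j\<le>m. z ^ j * (A j $$ (i,k)))"

definition divdiff :: "nat \<Rightarrow> nat \<Rightarrow> (nat \<Rightarrow> complex mat) \<Rightarrow> complex \<Rightarrow> complex \<Rightarrow> complex mat" where
  "divdiff n m A \<mu>1 \<mu>2 = (1 / (\<mu>1 - \<mu>2)) \<cdot>\<^sub>m (mpoly_eval n m A \<mu>1 - mpoly_eval n m A \<mu>2)"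

definition Fmat :: "nat \<Rightarrow> nat \<Rightarrow> (nat \<Rightarrow> complex mat) \<Rightarrow> complex \<Rightarrow> complex \<Rightarrow> real \<Rightarrow> complex mat" where
  "Fmat n m A \<mu>1 \<mu>2 \<gamma> = four_block_mat (mpoly_eval n m A \<mu>1) (0\<^sub>m n n)
      (complex_of_real \<gamma> \<cdot>\<^sub>m divdiff n m A \<mu>1 \<mu>2) (mpoly_eval n m A \<mu>2)"

text \<open>Singular values of a matrix M: square roots of the eigenvalues of M^* M, counted with
  algebraic multiplicity, in nonincreasing order. sing_val k M is the k-th largest (k >= 1).\<close>
definition sing_vals :: "complex mat \<Rightarrow> real list" where
  "sing_vals M = map sqrt (rev (sorted_list_of_multiset
      (image_mset Re (proots (char_poly (mat_adjoint M * M))))))"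

definition sing_val :: "nat \<Rightarrow> complex mat \<Rightarrow> real" where
  "sing_val k M = sing_vals M ! (k - 1)"

end

theory Submission
  imports Defs
begin

definition mv :: "nat \<Rightarrow> (nat \<Rightarrow> nat \<Rightarrow> complex) \<Rightarrow> (nat \<Rightarrow> complex) \<Rightarrow> nat \<Rightarrow> complex"
  where "mv n M x i = (\<Sum>j<n. M i j * x j)"
definition mh :: "nat \<Rightarrow> (nat \<Rightarrow> nat \<Rightarrow> complex) \<Rightarrow> (nat \<Rightarrow> complex) \<Rightarrow> nat \<Rightarrow> complex"
  where "mh n M x i = (\<Sum>j<n. cnj (M j i) * x j)"
definition ip :: "nat \<Rightarrow> (nat \<Rightarrow> complex) \<Rightarrow> (nat \<Rightarrow> complex) \<Rightarrow> complex"
  where "ip n f h = (\<Sum>i<n. f i * cnj (h i))"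

lemma mv_scale: "(\<forall>j<n. c j = \<alpha> * d j) \<Longrightarrow> mv n M c i = \<alpha> * mv n M d i"
  unfolding mv_def sum_distrib_left by (rule sum.cong) auto
lemma mh_scale: "(\<forall>j<n. c j = \<alpha> * d j) \<Longrightarrow> mh n M c i = \<alpha> * mh n M d i"
  unfolding mh_def sum_distrib_left by (rule sum.cong) auto
lemma mv_zero: "(\<forall>j<n. c j = 0) \<Longrightarrow> mv n M c i = 0"
  unfolding mv_def by (rule sum.neutral) auto
lemma mh_zero: "(\<forall>j<n. c j = 0) \<Longrightarrow> mh n M c i = 0"
  unfolding mh_def by (rule sum.neutral) auto
lemma mv_dd: "\<forall>i<n. \<forall>j<n. dd i j = k * (p1 i j - p2 i j) \<Longrightarrow> i < n \<Longrightarrow>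
   mv n dd x i = k * (mv n p1 x i - mv n p2 x i)"
proof -
  assume h: "\<forall>i<n. \<forall>j<n. dd i j = k * (p1 i j - p2 i j)" "i < n"
  have "mv n dd x i = (\<Sum>j<n. k * (p1 i j * x j - p2 i j * x j))"
    unfolding mv_def
  proof (rule sum.cong)
    fix j assume "j \<in> {..<n}"
    hence "dd i j = k * (p1 i j - p2 i j)" using h by auto
    thus "dd i j * x j = k * (p1 i j * x j - p2 i j * x j)" by (simp only:) (simp add: algebra_simps)
  qed simp
  thus ?thesis unfolding mv_def sum_distrib_left[symmetric] sum_subtractf by simp
qed
lemma mh_dd: "\<forall>i<n. \<forall>j<n. dd i j = k * (p1 i j - p2 i j) \<Longrightarrow> i < n \<Longrightarrow>
   mh n dd x i = cnj k * (mh n p1 x i - mh n p2 x i)"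
proof -
  assume h: "\<forall>i<n. \<forall>j<n. dd i j = k * (p1 i j - p2 i j)" "i < n"
  have "mh n dd x i = (\<Sum>j<n. cnj k * (cnj (p1 j i) * x j - cnj (p2 j i) * x j))"
    unfolding mh_def
  proof (rule sum.cong)
    fix j assume "j \<in> {..<n}"
    hence "dd j i = k * (p1 j i - p2 j i)" using h by auto
    thus "cnj (dd j i) * x j = cnj k * (cnj (p1 j i) * x j - cnj (p2 j i) * x j)" by (simp only:) (simp add: algebra_simps)
  qed simp
  thus ?thesis unfolding mh_def sum_distrib_left[symmetric] sum_subtractf by simp
qed

lemma ip_zero: assumes "ip n f f = 0" shows "\<forall>i<n. f i = 0"
proof -
  have "(\<Sum>i<n. f i * cnj (f i)) = complex_of_real (\<Sum>i<n. (cmod (f i))^2)"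
    by (simp add: complex_mult_cnj cmod_power2 del: of_real_power)
  hence "(\<Sum>i<n. (cmod (f i))^2) = 0" using assms unfolding ip_def by (metis of_real_eq_0_iff)
  hence "\<forall>i\<in>{..<n}. (cmod (f i))^2 = 0" by (subst (asm) sum_nonneg_eq_0_iff) auto
  thus ?thesis by auto
qed

lemma ip_lc: "ip n (\<lambda>i. x * f i + y * h i) (\<lambda>i. x * f i + y * h i) =
   x * cnj x * ip n f f + x * cnj y * ip n f h + y * cnj x * ip n h f + y * cnj y * ip n h h"
  unfolding ip_def by (simp add: algebra_simps sum.distrib sum_distrib_left)

lemma core_alpha:
  assumes E1: "\<forall>i<n. mv n p1 c i = s * a i"
    and E2: "\<forall>i<n. g * mv n dd c i + mv n p2 d i = s * b i"
    and E3: "\<forall>i<n. mh n p1 a i + cnj g * mh n dd b i = s * c i"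
    and E4: "\<forall>i<n. mh n p2 b i = s * d i"
    and dd: "\<forall>i<n. \<forall>j<n. dd i j = k * (p1 i j - p2 i j)"
    and nsD: "\<And>x. \<forall>i<n. mv n dd x i = 0 \<Longrightarrow> \<forall>i<n. x i = 0"
    and nsDh: "\<And>x. \<forall>i<n. mh n dd x i = 0 \<Longrightarrow> \<forall>i<n. x i = 0"
    and ha: "\<forall>i<n. a i = \<alpha> * b i" and hc: "\<forall>i<n. c i = \<alpha> * d i"
    and anz: "\<alpha> \<noteq> 0"
    and dnz: "i0 < n" "d i0 \<noteq> 0" and bnz: "i1 < n" "b i1 \<noteq> 0"
  shows False
proof -
  have kg: "k * g * \<alpha> = 1"
  proof (rule ccontr)
    assume ne: "k * g * \<alpha> \<noteq> 1"
    have "\<forall>i<n. mv n dd d i = 0"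
    proof (intro allI impI)
      fix i assume i: "i < n"
      have "\<alpha> * mv n p1 d i = s * (\<alpha> * b i)" using E1 i mv_scale[OF hc, of p1 i] ha by auto
      hence 1: "mv n p1 d i = s * b i" using anz by (simp add: algebra_simps)
      have 2: "g * (\<alpha> * mv n dd d i) + mv n p2 d i = s * b i" using E2 i mv_scale[OF hc, of dd i] by auto
      have 3: "mv n dd d i = k * (mv n p1 d i - mv n p2 d i)" using mv_dd[OF dd i] .
      have 4: "mv n p1 d i - mv n p2 d i = g * \<alpha> * mv n dd d i" using 1 2 by (simp add: algebra_simps)
      have "(1 - k * g * \<alpha>) * mv n dd d i = mv n dd d i - k * (g * \<alpha> * mv n dd d i)"
        by (simp add: algebra_simps)
      also have "\<dots> = 0" using 3 4 by simp
      finally have "(1 - k * g * \<alpha>) * mv n dd d i = 0" .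
      thus "mv n dd d i = 0" using ne by simp
    qed
    thus False using nsD dnz by blast
  qed
  have al: "\<alpha> + cnj k * cnj g = 0"
  proof (rule ccontr)
    assume ne: "\<alpha> + cnj k * cnj g \<noteq> 0"
    have "\<forall>i<n. mh n dd b i = 0"
    proof (intro allI impI)
      fix i assume i: "i < n"
      have 1: "\<alpha> * mh n p1 b i + cnj g * mh n dd b i = s * (\<alpha> * d i)"
        using E3 i mh_scale[OF ha, of p1 i] hc by auto
      have 2: "mh n p2 b i = s * d i" using E4 i by auto
      have 3: "mh n dd b i = cnj k * (mh n p1 b i - mh n p2 b i)" using mh_dd[OF dd i] .
      have "\<alpha> * mh n dd b i = cnj k * (\<alpha> * mh n p1 b i - \<alpha> * mh n p2 b i)"
        by (subst 3) (simp add: algebra_simps)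
      also have "\<alpha> * mh n p1 b i - \<alpha> * mh n p2 b i = - cnj g * mh n dd b i"
        using 1 2 by (simp add: algebra_simps)
      finally have "\<alpha> * mh n dd b i = cnj k * (- cnj g * mh n dd b i)" .
      hence "(\<alpha> + cnj k * cnj g) * mh n dd b i = 0" by (simp add: algebra_simps)
      thus "mh n dd b i = 0" using ne by simp
    qed
    thus False using nsDh bnz by blast
  qed
  hence "\<alpha> = - cnj (k * g)" by (simp add: algebra_simps eq_neg_iff_add_eq_0)
  with kg have "- ((k * g) * cnj (k * g)) = 1" by (simp add: algebra_simps)
  hence "- complex_of_real ((cmod (k*g))^2) = 1" by (simp only: complex_mult_cnj cmod_power2)
  hence "- ((cmod (k*g))^2) = (1::real)" by (metis of_real_1 of_real_eq_iff of_real_minus)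
  moreover have "(cmod (k*g))^2 \<ge> 0" by simp
  ultimately show False by linarith
qed

lemma ip_zero_fun: "\<forall>i<n. f i = 0 \<Longrightarrow> ip n f h = 0"
  unfolding ip_def by (rule sum.neutral) auto

lemma dep_false:
  assumes E1: "\<forall>i<n. mv n p1 c i = s * a i"
    and E2: "\<forall>i<n. g * mv n dd c i + mv n p2 d i = s * b i"
    and E3: "\<forall>i<n. mh n p1 a i + cnj g * mh n dd b i = s * c i"
    and E4: "\<forall>i<n. mh n p2 b i = s * d i"
    and dd: "\<forall>i<n. \<forall>j<n. dd i j = k * (p1 i j - p2 i j)"
    and nsD: "\<And>x. \<forall>i<n. mv n dd x i = 0 \<Longrightarrow> \<forall>i<n. x i = 0"
    and nsDh: "\<And>x. \<forall>i<n. mh n dd x i = 0 \<Longrightarrow> \<forall>i<n. x i = 0"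
    and gnz: "g \<noteq> 0"
    and G1: "ip n a a = ip n c c" and G2: "ip n a b = ip n c d" and G3: "ip n b a = ip n d c"
    and G4: "ip n b b = ip n d d"
    and unit: "\<exists>i<n. a i \<noteq> 0 \<or> b i \<noteq> 0"
    and dep: "\<forall>i<n. x * a i + y * b i = 0" and xy: "x \<noteq> 0 \<or> y \<noteq> 0"
  shows False
proof -
  have "ip n (\<lambda>i. x * c i + y * d i) (\<lambda>i. x * c i + y * d i)
      = ip n (\<lambda>i. x * a i + y * b i) (\<lambda>i. x * a i + y * b i)"
    unfolding ip_lc G1 G2 G3 G4 ..
  also have "\<dots> = 0" by (rule ip_zero_fun) (use dep in auto)
  finally have depc: "\<forall>i<n. x * c i + y * d i = 0" by (rule ip_zero)
  show False
  proof (cases "x = 0")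
    case True
    with xy have y: "y \<noteq> 0" by auto
    have b0: "\<forall>i<n. b i = 0" using dep True y by auto
    have d0: "\<forall>i<n. d i = 0" using depc True y by auto
    have "\<forall>i<n. mv n dd c i = 0"
    proof (intro allI impI)
      fix i assume i: "i < n"
      have "g * mv n dd c i = 0" using E2 i b0 mv_zero[OF d0, of p2 i] by auto
      thus "mv n dd c i = 0" using gnz by simp
    qed
    hence "\<forall>i<n. c i = 0" by (rule nsD)
    hence "ip n a a = 0" using G1 ip_zero_fun by metis
    hence "\<forall>i<n. a i = 0" by (rule ip_zero)
    with b0 unit show False by auto
  next
    case xnz: False
    show False
    proof (cases "y = 0")
      case True
      have a0: "\<forall>i<n. a i = 0" using dep True xnz by auto
      have c0: "\<forall>i<n. c i = 0" using depc True xnz by auto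
      have "\<forall>i<n. mh n dd b i = 0"
      proof (intro allI impI)
        fix i assume i: "i < n"
        have "cnj g * mh n dd b i = 0" using E3 i c0 mh_zero[OF a0, of p1 i] by auto
        thus "mh n dd b i = 0" using gnz by simp
      qed
      hence b0: "\<forall>i<n. b i = 0" by (rule nsDh)
      with a0 unit show False by auto
    next
      case ynz: False
      define \<alpha> where "\<alpha> = - y / x"
      have anz: "\<alpha> \<noteq> 0" using xnz ynz unfolding \<alpha>_def by simp
      have ha: "\<forall>i<n. a i = \<alpha> * b i"
      proof (intro allI impI)
        fix i assume "i < n" hence "x * a i + y * b i = 0" using dep by auto
        thus "a i = \<alpha> * b i" using xnz unfolding \<alpha>_def by (simp add: field_simps add_eq_0_iff2) 
      qed
      have hc: "\<forall>i<n. c i = \<alpha> * d i"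
      proof (intro allI impI)
        fix i assume "i < n" hence "x * c i + y * d i = 0" using depc by auto
        thus "c i = \<alpha> * d i" using xnz unfolding \<alpha>_def by (simp add: field_simps add_eq_0_iff2) 
      qed
      obtain i1 where bnz: "i1 < n" "b i1 \<noteq> 0" using unit ha by fastforce
      have "\<not> (\<forall>i<n. d i = 0)"
      proof
        assume "\<forall>i<n. d i = 0"
        hence "ip n b b = 0" using G4 ip_zero_fun by metis
        hence "\<forall>i<n. b i = 0" by (rule ip_zero)
        with bnz show False by auto
      qed
      then obtain i0 where dnz: "i0 < n" "d i0 \<noteq> 0" by auto
      show False by (rule core_alpha[OF E1 E2 E3 E4 dd nsD nsDh ha hc anz dnz bnz])
    qed
  qed
qed

lemma dep_transfer:
  assumes G1: "ip n a a = ip n c c" and G2: "ip n a b = ip n c d" and G3: "ip n b a = ip n d c"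
    and G4: "ip n b b = ip n d d" and dep: "\<forall>i<n. x * c i + y * d i = 0"
  shows "\<forall>i<n. x * a i + y * b i = 0"
proof -
  have "ip n (\<lambda>i. x * a i + y * b i) (\<lambda>i. x * a i + y * b i)
      = ip n (\<lambda>i. x * c i + y * d i) (\<lambda>i. x * c i + y * d i)"
    unfolding ip_lc G1 G2 G3 G4 ..
  also have "\<dots> = 0" by (rule ip_zero_fun) (use dep in auto)
  finally show ?thesis by (rule ip_zero)
qed

lemma adj_dim[simp]: "dim_row (mat_adjoint M) = dim_col M" "dim_col (mat_adjoint M) = dim_row M"
  unfolding mat_adjoint_def by auto
lemma adj_index[simp]: "i < dim_col M \<Longrightarrow> j < dim_row M \<Longrightarrow> mat_adjoint M $$ (i,j) = conjugate (M $$ (j,i))"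
  unfolding mat_adjoint_def by (auto simp: mat_of_rows_def)

lemma mv_bridge: assumes "M \<in> carrier_mat n n" "x \<in> carrier_vec n" "i < n"
  shows "(M *\<^sub>v x) $ i = mv n (\<lambda>i j. M $$ (i,j)) (\<lambda>j. x $ j) i"
  using assms by (simp add: mv_def scalar_prod_def lessThan_atLeast0)

lemma mh_bridge: assumes "M \<in> carrier_mat n n" "x \<in> carrier_vec n" "i < n"
  shows "(mat_adjoint M *\<^sub>v x) $ i = mh n (\<lambda>i j. M $$ (i,j)) (\<lambda>j. x $ j) i"
  using assms by (simp add: mh_def scalar_prod_def lessThan_atLeast0 mult.commute)

lemma mh_bridge_smult: assumes "M \<in> carrier_mat n n" "x \<in> carrier_vec n" "i < n"
  shows "(mat_adjoint (g \<cdot>\<^sub>m M) *\<^sub>v x) $ i = cnj g * mh n (\<lambda>i j. M $$ (i,j)) (\<lambda>j. x $ j) i"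
  using assms by (simp add: mh_def scalar_prod_def lessThan_atLeast0 sum_distrib_left algebra_simps)

lemma mv_bridge_smult: assumes "M \<in> carrier_mat n n" "x \<in> carrier_vec n" "i < n"
  shows "((g \<cdot>\<^sub>m M) *\<^sub>v x) $ i = g * mv n (\<lambda>i j. M $$ (i,j)) (\<lambda>j. x $ j) i"
  using assms by (simp add: mv_def scalar_prod_def lessThan_atLeast0 sum_distrib_left algebra_simps)

lemma adj_four_block:
  assumes A: "A \<in> carrier_mat n n" and B: "B \<in> carrier_mat n n" and C: "C \<in> carrier_mat n n" and D: "D \<in> carrier_mat n n"
  shows "mat_adjoint (four_block_mat A B C D) = four_block_mat (mat_adjoint A) (mat_adjoint C) (mat_adjoint B) (mat_adjoint D)"
  using assms by (intro eq_matI) (auto simp: index_mat_four_block)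

lemma matcols_mult: assumes "a \<in> carrier_vec n" "b \<in> carrier_vec n" "w \<in> carrier_vec 2" "i < n"
  shows "(mat_of_cols n [a,b] *\<^sub>v w) $ i = a $ i * w $ 0 + b $ i * w $ 1"
  using assms by (simp add: scalar_prod_def numeral_2_eq_2 row_def mat_of_cols_index)

lemma rank2:
  fixes a b :: "complex vec"
  assumes a: "a \<in> carrier_vec n" and b: "b \<in> carrier_vec n"
    and H: "\<And>x y. \<forall>i<n. x * a $ i + y * b $ i = 0 \<Longrightarrow> x = 0 \<and> y = 0"
  shows "vec_space.rank n (mat_of_cols n [a,b]) = 2"
proof -
  have U: "mat_of_cols n [a,b] \<in> carrier_mat n 2" by auto
  have cU: "cols (mat_of_cols n [a,b]) = [a,b]" using a b by (intro cols_mat_of_cols) auto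
  have dist: "distinct (cols (mat_of_cols n [a,b]))"
  proof -
    have "a \<noteq> b"
    proof
      assume "a = b"
      hence "\<forall>i<n. 1 * a $ i + (-1) * b $ i = 0" by simp
      from H[OF this] show False by simp
    qed
    thus ?thesis unfolding cU by simp
  qed
  have "\<not> module.lin_dep class_ring (module_vec TYPE(complex) n) (set (cols (mat_of_cols n [a,b])))"
  proof
    assume ld: "module.lin_dep class_ring (module_vec TYPE(complex) n) (set (cols (mat_of_cols n [a,b])))"
    obtain w where w: "w \<in> carrier_vec 2" "w \<noteq> 0\<^sub>v 2" "mat_of_cols n [a,b] *\<^sub>v w = 0\<^sub>v n"
      by (rule vec_space.lin_depE[OF U ld dist])
    have "\<forall>i<n. w $ 0 * a $ i + w $ 1 * b $ i = 0"
    proof (intro allI impI)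
      fix i assume i: "i < n"
      have "(mat_of_cols n [a,b] *\<^sub>v w) $ i = 0" using w(3) i by simp
      thus "w $ 0 * a $ i + w $ 1 * b $ i = 0" using matcols_mult[OF a b w(1) i] by (simp add: mult.commute)
    qed
    from H[OF this] have "w $ 0 = 0" "w $ 1 = 0" by auto
    hence "w = 0\<^sub>v 2" using w(1) by (intro eq_vecI) (auto simp: less_2_cases_iff)
    with w(2) show False by simp
  qed
  thus ?thesis using vec_space.lin_indpt_full_rank[OF U dist] by blast
qed


theorem lemma5:
  fixes n m :: nat and A :: "nat \<Rightarrow> complex mat" and \<mu>1 \<mu>2 :: complex
    and \<gamma>s ss :: real and u v :: "complex vec"
  assumes A_dim: "\<And>j. j \<le> m \<Longrightarrow> A j \<in> carrier_mat n n"
    and detAm: "det (A m) \<noteq> 0"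
    and mu_ne: "\<mu>1 \<noteq> \<mu>2"
    and gamma_nonneg: "\<gamma>s \<ge> 0"
    and gamma_max: "\<And>\<gamma>. \<gamma> \<ge> 0 \<Longrightarrow>
         sing_val (2*n - 1) (Fmat n m A \<mu>1 \<mu>2 \<gamma>) \<le> sing_val (2*n - 1) (Fmat n m A \<mu>1 \<mu>2 \<gamma>s)"
    and ss_def: "ss = sing_val (2*n - 1) (Fmat n m A \<mu>1 \<mu>2 \<gamma>s)"
    and ss_pos: "ss > 0"
    and u_dim: "u \<in> carrier_vec (2*n)" and v_dim: "v \<in> carrier_vec (2*n)"
    and u_unit: "u \<bullet>c u = 1" and v_unit: "v \<bullet>c v = 1"
    and right_sv: "Fmat n m A \<mu>1 \<mu>2 \<gamma>s *\<^sub>v v = complex_of_real ss \<cdot>\<^sub>v u"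
    and left_sv: "mat_adjoint (Fmat n m A \<mu>1 \<mu>2 \<gamma>s) *\<^sub>v u = complex_of_real ss \<cdot>\<^sub>v v"
    and orth: "(divdiff n m A \<mu>1 \<mu>2 *\<^sub>v vec_first v n) \<bullet>c vec_last u n = 0"
    and cross: "vec_first u n \<bullet>c vec_last u n = vec_first v n \<bullet>c vec_last v n"
    and gram: "mat_adjoint (mat_of_cols n [vec_first u n, vec_last u n]) * mat_of_cols n [vec_first u n, vec_last u n]
             = mat_adjoint (mat_of_cols n [vec_first v n, vec_last v n]) * mat_of_cols n [vec_first v n, vec_last v n]"
    and gamma_pos: "\<gamma>s > 0"
    and nonsing: "det (divdiff n m A \<mu>1 \<mu>2) \<noteq> 0"
  shows "vec_space.rank n (mat_of_cols n [vec_first u n, vec_last u n]) = min n 2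
       \<and> vec_space.rank n (mat_of_cols n [vec_first v n, vec_last v n]) = min n 2"
  proof -
  define P1 where "P1 = mpoly_eval n m A \<mu>1"
  define P2 where "P2 = mpoly_eval n m A \<mu>2"
  define D where "D = divdiff n m A \<mu>1 \<mu>2"
  define k where "k = 1 / (\<mu>1 - \<mu>2)"
  define g where "g = complex_of_real \<gamma>s"
  define s where "s = complex_of_real ss"
  define a where "a = vec_first u n"
  define b where "b = vec_last u n"
  define c where "c = vec_first v n"
  define d where "d = vec_last v n"
  have P1: "P1 \<in> carrier_mat n n" and P2: "P2 \<in> carrier_mat n n" unfolding P1_def P2_def mpoly_eval_def by auto
  have D: "D \<in> carrier_mat n n" unfolding D_def divdiff_def using P1 P2 P1_def P2_def by auto
  have Dij: "\<forall>i<n. \<forall>j<n. D $$ (i,j) = k * (P1 $$ (i,j) - P2 $$ (i,j))"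
    unfolding D_def divdiff_def k_def using P1 P2 P1_def P2_def by auto
  have F: "Fmat n m A \<mu>1 \<mu>2 \<gamma>s = four_block_mat P1 (0\<^sub>m n n) (g \<cdot>\<^sub>m D) P2"
    unfolding Fmat_def P1_def P2_def D_def g_def ..
  have a: "a \<in> carrier_vec n" and b: "b \<in> carrier_vec n" and c: "c \<in> carrier_vec n" and d: "d \<in> carrier_vec n"
    unfolding a_def b_def c_def d_def by auto
  have u_dim': "u \<in> carrier_vec (n+n)" and v_dim': "v \<in> carrier_vec (n+n)" using u_dim v_dim by (auto simp: mult_2)
  have uab: "u = a @\<^sub>v b" unfolding a_def b_def using vec_first_last_append[OF u_dim'] ..
  have vcd: "v = c @\<^sub>v d" unfolding c_def d_def using vec_first_last_append[OF v_dim'] ..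
  have gD: "g \<cdot>\<^sub>m D \<in> carrier_mat n n" using D by simp
  have Fv: "Fmat n m A \<mu>1 \<mu>2 \<gamma>s *\<^sub>v v = (P1 *\<^sub>v c + 0\<^sub>m n n *\<^sub>v d) @\<^sub>v ((g \<cdot>\<^sub>m D) *\<^sub>v c + P2 *\<^sub>v d)"
    unfolding F vcd by (rule four_block_mat_mult_vec[OF P1 _ gD P2 c d]) simp
  have adjF: "mat_adjoint (Fmat n m A \<mu>1 \<mu>2 \<gamma>s) = four_block_mat (mat_adjoint P1) (mat_adjoint (g \<cdot>\<^sub>m D)) (mat_adjoint (0\<^sub>m n n)) (mat_adjoint P2)"
    unfolding F by (rule adj_four_block[OF P1 _ gD P2]) simp
  have aP1: "mat_adjoint P1 \<in> carrier_mat n n" and aP2: "mat_adjoint P2 \<in> carrier_mat n n"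
    and agD: "mat_adjoint (g \<cdot>\<^sub>m D) \<in> carrier_mat n n" and a0: "mat_adjoint (0\<^sub>m n n :: complex mat) \<in> carrier_mat n n"
    using P1 P2 gD by (auto intro!: carrier_matI)
  have Fu: "mat_adjoint (Fmat n m A \<mu>1 \<mu>2 \<gamma>s) *\<^sub>v u = (mat_adjoint P1 *\<^sub>v a + mat_adjoint (g \<cdot>\<^sub>m D) *\<^sub>v b) @\<^sub>v (mat_adjoint (0\<^sub>m n n) *\<^sub>v a + mat_adjoint P2 *\<^sub>v b)"
    unfolding adjF uab by (rule four_block_mat_mult_vec[OF aP1 agD a0 aP2 a b])
  have ua: "\<And>i. i < n \<Longrightarrow> u $ i = a $ i" and ub: "\<And>i. i < n \<Longrightarrow> u $ (n + i) = b $ i"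
    and vc: "\<And>i. i < n \<Longrightarrow> v $ i = c $ i" and vd: "\<And>i. i < n \<Longrightarrow> v $ (n + i) = d $ i"
    using u_dim v_dim unfolding a_def b_def c_def d_def vec_first_def vec_last_def by auto
  let ?p1 = "\<lambda>i j. P1 $$ (i,j)" let ?p2 = "\<lambda>i j. P2 $$ (i,j)" let ?dd = "\<lambda>i j. D $$ (i,j)"
  let ?a = "\<lambda>i. a $ i" let ?b = "\<lambda>i. b $ i" let ?c = "\<lambda>i. c $ i" let ?d = "\<lambda>i. d $ i"
  have E1: "\<forall>i<n. mv n ?p1 ?c i = s * ?a i"
  proof (intro allI impI)
    fix i assume i: "i < n"
    have "(Fmat n m A \<mu>1 \<mu>2 \<gamma>s *\<^sub>v v) $ i = (complex_of_real ss \<cdot>\<^sub>v u) $ i" using right_sv by simp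
    thus "mv n ?p1 ?c i = s * ?a i" unfolding Fv using i P1 c d u_dim ua[OF i] mv_bridge[OF P1 c i]
      by (simp add: s_def)
  qed
  have E2: "\<forall>i<n. g * mv n ?dd ?c i + mv n ?p2 ?d i = s * ?b i"
  proof (intro allI impI)
    fix i assume i: "i < n"
    have "(Fmat n m A \<mu>1 \<mu>2 \<gamma>s *\<^sub>v v) $ (n+i) = (complex_of_real ss \<cdot>\<^sub>v u) $ (n+i)" using right_sv by simp
    thus "g * mv n ?dd ?c i + mv n ?p2 ?d i = s * ?b i" unfolding Fv using i P1 P2 D c d u_dim ub[OF i]
        mv_bridge[OF P2 d i] mv_bridge_smult[OF D c i, of g]
      by (simp add: s_def)
  qed
  have E3: "\<forall>i<n. mh n ?p1 ?a i + cnj g * mh n ?dd ?b i = s * ?c i"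
  proof (intro allI impI)
    fix i assume i: "i < n"
    have "(mat_adjoint (Fmat n m A \<mu>1 \<mu>2 \<gamma>s) *\<^sub>v u) $ i = (complex_of_real ss \<cdot>\<^sub>v v) $ i" using left_sv by simp
    thus "mh n ?p1 ?a i + cnj g * mh n ?dd ?b i = s * ?c i" unfolding Fu using i P1 D aP1 agD a b v_dim vc[OF i]
        mh_bridge[OF P1 a i] mh_bridge_smult[OF D b i, of g]
      by (simp add: s_def)
  qed
  have E4: "\<forall>i<n. mh n ?p2 ?b i = s * ?d i"
  proof (intro allI impI)
    fix i assume i: "i < n"
    have "(mat_adjoint (Fmat n m A \<mu>1 \<mu>2 \<gamma>s) *\<^sub>v u) $ (n+i) = (complex_of_real ss \<cdot>\<^sub>v v) $ (n+i)" using left_sv by simp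
    moreover have z: "mat_adjoint (0\<^sub>m n n :: complex mat) = 0\<^sub>m n n" by (rule eq_matI) auto
    ultimately show "mh n ?p2 ?b i = s * ?d i" unfolding Fu using i P1 P2 D aP2 a b v_dim vd[OF i]
        mh_bridge[OF P2 b i]
      by (simp add: s_def)
  qed
  have nsD: "\<forall>i<n. x i = 0" if h: "\<forall>i<n. mv n ?dd x i = 0" for x
  proof -
    have "D *\<^sub>v vec n x = 0\<^sub>v n"
    proof (rule eq_vecI)
      fix i assume "i < dim_vec (0\<^sub>v n :: complex vec)"
      hence i: "i < n" by simp
      have "(D *\<^sub>v vec n x) $ i = mv n ?dd (\<lambda>j. vec n x $ j) i" by (rule mv_bridge[OF D _ i]) simp
      also have "\<dots> = mv n ?dd x i" unfolding mv_def by (rule sum.cong) auto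
      finally show "(D *\<^sub>v vec n x) $ i = 0\<^sub>v n $ i" using h i by simp
    qed (use D in simp)
    hence "vec n x = 0\<^sub>v n" using det_0_iff_vec_prod_zero[OF D] nonsing D_def vec_carrier[of n x] by blast
    thus ?thesis by (metis index_vec index_zero_vec(1))
  qed
  have nsDh: "\<forall>i<n. x i = 0" if h: "\<forall>i<n. mh n ?dd x i = 0" for x
  proof -
    have DT: "transpose_mat D \<in> carrier_mat n n" using D by simp
    have "transpose_mat D *\<^sub>v vec n (\<lambda>j. cnj (x j)) = 0\<^sub>v n"
    proof (rule eq_vecI)
      fix i assume "i < dim_vec (0\<^sub>v n :: complex vec)"
      hence i: "i < n" by simp
      have "(transpose_mat D *\<^sub>v vec n (\<lambda>j. cnj (x j))) $ i = (\<Sum>j<n. D $$ (j,i) * cnj (x j))"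
        using D i by (simp add: scalar_prod_def lessThan_atLeast0)
      also have "\<dots> = cnj (mh n ?dd x i)" unfolding mh_def by (simp add: mult.commute)
      finally show "(transpose_mat D *\<^sub>v vec n (\<lambda>j. cnj (x j))) $ i = 0\<^sub>v n $ i" using h i by simp
    qed (use D in simp)
    hence "vec n (\<lambda>j. cnj (x j)) = 0\<^sub>v n"
      using det_0_iff_vec_prod_zero[OF DT] det_transpose[OF D] nonsing D_def vec_carrier[of n "\<lambda>j. cnj (x j)"] by metis
    thus ?thesis by (metis complex_cnj_zero_iff index_vec index_zero_vec(1))
  qed
  have gnz: "g \<noteq> 0" using gamma_pos unfolding g_def by simp
  define U where "U = mat_of_cols n [a, b]"
  define V where "V = mat_of_cols n [c, d]"
  have gram': "mat_adjoint U * U = mat_adjoint V * V" using gram unfolding U_def V_def a_def b_def c_def d_def .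
  have gU: "(mat_adjoint U * U) $$ (i,j) = ip n (\<lambda>l. [a,b] ! j $ l) (\<lambda>l. [a,b] ! i $ l)" if "i < 2" "j < 2" for i j
    using that a b unfolding U_def ip_def by (simp add: scalar_prod_def lessThan_atLeast0 mat_of_cols_index mult.commute)
  have gV: "(mat_adjoint V * V) $$ (i,j) = ip n (\<lambda>l. [c,d] ! j $ l) (\<lambda>l. [c,d] ! i $ l)" if "i < 2" "j < 2" for i j
    using that c d unfolding V_def ip_def by (simp add: scalar_prod_def lessThan_atLeast0 mat_of_cols_index mult.commute)
  have G1: "ip n ?a ?a = ip n ?c ?c" using gU[of 0 0] gV[of 0 0] gram' by simp
  have G2: "ip n ?a ?b = ip n ?c ?d" using gU[of 1 0] gV[of 1 0] gram' by simp
  have G3: "ip n ?b ?a = ip n ?d ?c" using gU[of 0 1] gV[of 0 1] gram' by simp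
  have G4: "ip n ?b ?b = ip n ?d ?d" using gU[of 1 1] gV[of 1 1] gram' by simp
  have unit: "\<exists>i<n. ?a i \<noteq> 0 \<or> ?b i \<noteq> 0"
  proof (rule ccontr)
    assume "\<not> ?thesis"
    hence "u = 0\<^sub>v (2*n)" using u_dim a b unfolding uab
      by (intro eq_vecI) (auto simp: index_append_vec mult_2)
    thus False using u_unit by simp
  qed
  have HU: "x = 0 \<and> y = 0" if h: "\<forall>i<n. x * ?a i + y * ?b i = 0" for x y
  proof (rule ccontr)
    assume "\<not> (x = 0 \<and> y = 0)"
    hence xy: "x \<noteq> 0 \<or> y \<noteq> 0" by simp
    show False by (rule dep_false[OF E1 E2 E3 E4 Dij nsD nsDh gnz G1 G2 G3 G4 unit h xy])
  qed
  have HV: "x = 0 \<and> y = 0" if h: "\<forall>i<n. x * ?c i + y * ?d i = 0" for x y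
    by (rule HU, rule dep_transfer[OF G1 G2 G3 G4 h])
  have n2: "n \<ge> 2"
  proof (rule ccontr)
    assume "\<not> n \<ge> 2"
    moreover obtain i where i: "i < n" "?a i \<noteq> 0 \<or> ?b i \<noteq> 0" using unit by blast
    ultimately have n1: "n = 1" "i = 0" by auto
    have "\<forall>i<n. ?b 0 * ?a i + (- ?a 0) * ?b i = 0" using n1 by auto
    from HU[OF this] i n1 show False by auto
  qed
  have "vec_space.rank n U = 2" unfolding U_def by (rule rank2[OF a b HU]) 
  moreover have "vec_space.rank n V = 2" unfolding V_def by (rule rank2[OF c d HV])
  ultimately show ?thesis using n2 unfolding U_def V_def a_def b_def c_def d_def by simp
qed

end
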